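(* Let $P=\{\bm{x}_1,\dots,\bm{x}_N\}$ be a population of $N$ solutions and let $\pi:\{1,\dots,N\}\to\{1,\dots,N\}$ be a bijection satisfying $\forall i\neq j:\ \bm{x}_i\succ_{\mathrm{c}}\bm{x}_j \Rightarrow \pi(i)<\pi(j)$. Consider one application of stochastic tournament selection to $P$ (with the winner being the picked solution of smallest $\pi$-value). Then: (i) every solution $\bm{x}_i\in P$ is selected with probability at least $1/N^2$; (ii) for every constant $c\ge 1$ there is a constant $\delta>0$ (independent of $N$) such that every $\bm{x}_i\in P$ with $\pi(i)\le c$ is selected with probability at least $\delta$.
   Context: Crowded comparison: each solution $\bm{x}$ of a population has a rank $\mathrm{rank}(\bm{x})$ (index of its non-dominated front) and a crowding distance $\mathrm{dist}(\bm{x})$; $\bm{x}\succ_{\mathrm{c}}\bm{y}$ means $\mathrm{rank}(\bm{x})<\mathrm{rank}(\bm{y})$, or $\mathrm{rank}(\bm{x})=\mathrm{rank}(\bm{y})$ and $\mathrm{dist}(\bm{x})>\mathrm{dist}(\bm{y})$. Stochastic tournament selection on a population $P$ of size $N$: choose $k$ uniformly at random from $\{1,2,\dots,N\}$, then pick $k$ solutions from $P$ independently and uniformly at random with replacement, and output the picked solution that is best, i.e. the one with smallest $\pi$-value, where $\pi$ is a bijection as in the claim (solutions with identical rank and crowding distance receive their relative $\pi$-order uniformly at random). *)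

theory Defs
  imports "HOL-Probability.Probability"
begin

text \<open>Population P = {x_1,...,x_N} is represented by its index set {1..N}.
  rk i and cdist i are the rank (non-dominated front index) and crowding
  distance of solution x_i.\<close>

definition crowded_better :: "(nat \<Rightarrow> nat) \<Rightarrow> (nat \<Rightarrow> real) \<Rightarrow> nat \<Rightarrow> nat \<Rightarrow> bool" where
  "crowded_better rk cdist i j \<longleftrightarrow>
     rk i < rk j \<or> (rk i = rk j \<and> cdist i > cdist j)"

definition stoch_tournament :: "nat \<Rightarrow> (nat \<Rightarrow> nat) \<Rightarrow> nat pmf" where
  "stoch_tournament N \<pi> =
     do { k \<leftarrow> pmf_of_set {1..N};
          picks \<leftarrow> replicate_pmf k (pmf_of_set {1..N});
          return_pmf (arg_min_list \<pi> picks) }"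

end

theory Submission
  imports Defs
begin


lemma bind_set_prob:
  assumes "finite S" "S \<noteq> {}"
  shows "measure_pmf.prob (bind_pmf (pmf_of_set S) N) X = (\<Sum>x\<in>S. measure_pmf.prob (N x) X) / card S"
proof -
  have "ennreal (measure_pmf.prob (bind_pmf (pmf_of_set S) N) X) = (\<Sum>x\<in>S. ennreal (measure_pmf.prob (N x) X)) / card S"
    using assms by (simp add: measure_pmf.emeasure_eq_measure[symmetric] nn_integral_pmf_of_set)
  also have "\<dots> = ennreal ((\<Sum>x\<in>S. measure_pmf.prob (N x) X) / card S)"
  proof -
    have c: "0 < real (card S)" using assms by (simp add: card_gt_0_iff)
    have "(\<Sum>x\<in>S. ennreal (measure_pmf.prob (N x) X)) = ennreal (\<Sum>x\<in>S. measure_pmf.prob (N x) X)"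
      by (rule sum_ennreal) simp
    moreover have "(of_nat (card S) :: ennreal) = ennreal (real (card S))"
      by (simp add: ennreal_of_nat_eq_real_of_nat)
    ultimately show ?thesis using c by (simp add: divide_ennreal sum_nonneg)
  qed
  finally show ?thesis by (simp add: divide_nonneg_nonneg sum_nonneg)
qed

lemma rep_Suc_prob:
  assumes "finite S" "S \<noteq> {}"
  shows "measure_pmf.prob (replicate_pmf (Suc k) (pmf_of_set S)) E
     = (\<Sum>x\<in>S. measure_pmf.prob (replicate_pmf k (pmf_of_set S)) {xs. x#xs \<in> E}) / card S"
proof -
  have "replicate_pmf (Suc k) (pmf_of_set S) = bind_pmf (pmf_of_set S) (\<lambda>x. map_pmf (\<lambda>xs. x#xs) (replicate_pmf k (pmf_of_set S)))"
    by (simp add: map_pmf_def)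
  then show ?thesis
    using assms by (simp add: bind_set_prob vimage_def)
qed

lemma st_pmf:
  assumes "N \<ge> 1"
  shows "pmf (stoch_tournament N \<pi>) i = (\<Sum>k\<in>{1..N}. measure_pmf.prob (replicate_pmf k (pmf_of_set {1..N})) {xs. arg_min_list \<pi> xs = i}) / N"
proof -
  have "stoch_tournament N \<pi> = bind_pmf (pmf_of_set {1..N}) (\<lambda>k. map_pmf (arg_min_list \<pi>) (replicate_pmf k (pmf_of_set {1..N})))"
    by (simp add: stoch_tournament_def map_pmf_def)
  then show ?thesis using assms by (simp add: pmf_bind integral_pmf_of_set pmf_map vimage_def)
qed

lemma main_bounds:
  fixes N :: nat and \<pi> :: "nat \<Rightarrow> nat" and i :: nat
  assumes N1: "N \<ge> 1" and bij: "bij_betw \<pi> {1..N} {1..N}" and iN: "i \<in> {1..N}"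
  shows "pmf (stoch_tournament N \<pi>) i \<ge> 1 / (real N)^2"
    and "pmf (stoch_tournament N \<pi>) i \<ge> 1 / (32 * (real (\<pi> i))^2)"
proof -
  define U where "U = pmf_of_set {1..N::nat}"
  define Sg where "Sg = {j\<in>{1..N}. \<pi> i \<le> \<pi> j}"
  define P where "P = (\<lambda>k E. measure_pmf.prob (replicate_pmf k U) E)"
  define g where "g = (\<lambda>k. P k {xs. set xs \<subseteq> Sg})"
  define f where "f = (\<lambda>k. P k {xs. set xs \<subseteq> Sg \<and> i \<in> set xs})"
  define q where "q = real (\<pi> i)"
  have inj: "inj_on \<pi> {1..N}" using bij bij_betw_def by blast
  have piN: "\<pi> i \<in> {1..N}" using bij iN bij_betwE by blast
  have q1: "1 \<le> q" "q \<le> N" using piN q_def by auto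
  have Npos: "(0::real) < N" using N1 by simp
  have SgN: "Sg \<subseteq> {1..N}" unfolding Sg_def by auto
  have iSg: "i \<in> Sg" using iN unfolding Sg_def by auto
  have "\<pi> ` Sg = {\<pi> i..N}"
  proof
    show "\<pi> ` Sg \<subseteq> {\<pi> i..N}" unfolding Sg_def using bij bij_betwE by fastforce
    show "{\<pi> i..N} \<subseteq> \<pi> ` Sg"
    proof
      fix y assume y: "y \<in> {\<pi> i..N}"
      then have "y \<in> \<pi> ` {1..N}" using bij piN bij_betw_imp_surj_on by fastforce
      then obtain j where "j \<in> {1..N}" "y = \<pi> j" by auto
      then show "y \<in> \<pi> ` Sg" using y unfolding Sg_def by auto
    qed
  qed
  moreover have "inj_on \<pi> Sg" using inj SgN inj_on_subset by blast
  ultimately have "card Sg = card {\<pi> i..N}" by (metis card_image)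
  then have cardSg: "real (card Sg) = N + 1 - q" using piN q_def by auto
  have finSg: "finite Sg" using SgN finite_subset by blast
  have Psuc: "P (Suc k) E = (\<Sum>x\<in>{1..N}. P k {xs. x#xs \<in> E}) / N" for k E
    unfolding P_def U_def using rep_Suc_prob[of "{1..N}" k E] N1 by simp
  have Pnn: "0 \<le> P k E" for k E unfolding P_def by simp
  have g0: "g 0 = 1" unfolding g_def P_def by simp
  have gsuc: "g (Suc k) = (N + 1 - q) / N * g k" for k
  proof -
    have "g (Suc k) = (\<Sum>x\<in>{1..N}. P k {xs. x#xs \<in> {xs. set xs \<subseteq> Sg}}) / N"
      unfolding g_def by (rule Psuc)
    also have "(\<Sum>x\<in>{1..N}. P k {xs. x#xs \<in> {xs. set xs \<subseteq> Sg}}) = (\<Sum>x\<in>{1..N}. if x \<in> Sg then g k else 0)"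
      unfolding g_def by (intro sum.cong) (auto intro: arg_cong[where f="P k"] simp: P_def)
    also have "\<dots> = (\<Sum>x\<in>Sg. g k)" using SgN by (simp add: sum.If_cases Int_absorb1)
    also have "\<dots> = (N + 1 - q) * g k" using cardSg by simp
    finally show ?thesis by simp
  qed
  have gbound: "g k \<ge> 1 - k * (q - 1) / N" for k
  proof (induction k)
    case 0 then show ?case using g0 by simp
  next
    case (Suc k)
    have c: "0 \<le> (N + 1 - q) / N" using q1 Npos by simp
    have "g (Suc k) \<ge> (N + 1 - q) / N * (1 - k * (q - 1) / N)"
      using gsuc mult_left_mono[OF Suc c] by simp
    moreover have "(N + 1 - q) / N * (1 - k * (q - 1) / N) \<ge> 1 - (Suc k) * (q - 1) / N"
    proof -
      have "(N + 1 - q) / N * (1 - k * (q - 1) / N) = 1 - (q-1)/N - k*(q-1)/N + k*(q-1)^2/N^2"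
        using Npos by (simp add: field_simps power2_eq_square)
      moreover have "0 \<le> k*(q-1)^2/N^2" using q1 by simp
      moreover have "1 - (Suc k)*(q-1)/N = 1 - (q-1)/N - k*(q-1)/N"
        using Npos by (simp add: field_simps)
      ultimately show ?thesis by linarith
    qed
    ultimately show ?case by linarith
  qed
  have f0: "f 0 = 0" unfolding f_def P_def by simp
  have fsuc: "f (Suc k) \<ge> (g k + (N - q) * f k) / N" for k
  proof -
    have e1: "f (Suc k) = (\<Sum>x\<in>{1..N}. P k {xs. x#xs \<in> {xs. set xs \<subseteq> Sg \<and> i \<in> set xs}}) / N"
      unfolding f_def by (rule Psuc)
    have e2: "(\<Sum>x\<in>{1..N}. P k {xs. x#xs \<in> {xs. set xs \<subseteq> Sg \<and> i \<in> set xs}})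
       \<ge> (\<Sum>x\<in>Sg. P k {xs. x#xs \<in> {xs. set xs \<subseteq> Sg \<and> i \<in> set xs}})"
      by (rule sum_mono2) (use SgN Pnn in auto)
    have e3: "(\<Sum>x\<in>Sg. P k {xs. x#xs \<in> {xs. set xs \<subseteq> Sg \<and> i \<in> set xs}})
        = P k {xs. i#xs \<in> {xs. set xs \<subseteq> Sg \<and> i \<in> set xs}} + (\<Sum>x\<in>Sg-{i}. P k {xs. x#xs \<in> {xs. set xs \<subseteq> Sg \<and> i \<in> set xs}})"
      using finSg iSg by (simp add: sum.remove)
    have e4: "P k {xs. i#xs \<in> {xs. set xs \<subseteq> Sg \<and> i \<in> set xs}} = g k"
      unfolding g_def using iSg by (intro arg_cong[where f="P k"]) auto
    have e5: "(\<Sum>x\<in>Sg-{i}. P k {xs. x#xs \<in> {xs. set xs \<subseteq> Sg \<and> i \<in> set xs}}) = (\<Sum>x\<in>Sg-{i}. f k)"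
      unfolding f_def by (intro sum.cong refl arg_cong[where f="P k"]) auto
    have e6: "(\<Sum>x\<in>Sg-{i}. f k) = (N - q) * f k"
    proof -
      have "card Sg \<ge> 1" using finSg iSg by (metis One_nat_def Suc_leI card_gt_0_iff empty_iff)
      then have "real (card (Sg - {i})) = real N - q"
        using cardSg finSg iSg by (simp add: card_Diff_singleton of_nat_diff)
      then show ?thesis by simp
    qed
    have "(\<Sum>x\<in>{1..N}. P k {xs. x#xs \<in> {xs. set xs \<subseteq> Sg \<and> i \<in> set xs}}) \<ge> g k + (N - q) * f k"
      using e2 unfolding e3 e4 e5 e6 .
    then show ?thesis unfolding e1 using Npos by (intro divide_right_mono) simp_all
  qed
  have fnn: "0 \<le> f k" for k unfolding f_def using Pnn by simp
  have f1: "f 1 \<ge> 1 / N" using fsuc[of 0] g0 f0 by simp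
  have fbound: "f k \<ge> k / N - (real k)^2 * q / (real N)^2" for k
  proof (induction k)
    case 0 then show ?case using f0 by simp
  next
    case (Suc k)
    have c: "0 \<le> N - q" using q1 by simp
    have "f (Suc k) \<ge> ((1 - k * (q - 1) / N) + (N - q) * (k / N - (real k)^2 * q / (real N)^2)) / N"
    proof -
      have "g k + (N - q) * f k \<ge> (1 - k * (q - 1) / N) + (N - q) * (k / N - (real k)^2 * q / (real N)^2)"
        using gbound[of k] mult_left_mono[OF Suc c] by linarith
      then have "(g k + (N - q) * f k) / N \<ge> ((1 - k * (q - 1) / N) + (N - q) * (k / N - (real k)^2 * q / (real N)^2)) / N"
        using Npos by (intro divide_right_mono) simp_all
      then show ?thesis using fsuc[of k] by linarith
    qed
    moreover have "((1 - k * (q - 1) / N) + (N - q) * (k / N - (real k)^2 * q / (real N)^2)) / N \<ge> (Suc k) / N - (real (Suc k))^2 * q / (real N)^2"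
    proof -
      have "((1 - k * (q - 1) / N) + (N - q) * (k / N - (real k)^2 * q / (real N)^2)) / N - ((Suc k) / N - (real (Suc k))^2 * q / (real N)^2)
         = (k + (real k)^2 * q^2 / N + q) / N^2"
        using Npos by (simp add: field_simps power2_eq_square)
      moreover have "0 \<le> (k + (real k)^2 * q^2 / N + q) / N^2" using q1 Npos by simp
      ultimately show ?thesis by linarith
    qed
    ultimately show ?case by linarith
  qed
  have sub: "f k \<le> P k {xs. arg_min_list \<pi> xs = i}" for k
    unfolding f_def P_def
  proof (rule measure_pmf.finite_measure_mono)
    show "{xs. set xs \<subseteq> Sg \<and> i \<in> set xs} \<subseteq> {xs. arg_min_list \<pi> xs = i}"
    proof safe
      fix xs assume a: "set xs \<subseteq> Sg" "i \<in> set xs"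
      then have ne: "xs \<noteq> []" by auto
      have "\<pi> (arg_min_list \<pi> xs) = Min (\<pi> ` set xs)" using f_arg_min_list_f[OF ne] .
      also have "\<dots> = \<pi> i"
        using a by (intro Min_eqI) (auto simp: Sg_def)
      finally have "\<pi> (arg_min_list \<pi> xs) = \<pi> i" .
      moreover have "arg_min_list \<pi> xs \<in> {1..N}" using arg_min_list_in[OF ne, of \<pi>] a SgN by blast
      ultimately show "arg_min_list \<pi> xs = i" using inj iN inj_on_def by metis
    qed
  qed simp
  have pm: "pmf (stoch_tournament N \<pi>) i = (\<Sum>k\<in>{1..N}. P k {xs. arg_min_list \<pi> xs = i}) / N"
    unfolding P_def U_def by (rule st_pmf[OF N1])
  have sum1: "(\<Sum>k\<in>{1..N}. P k {xs. arg_min_list \<pi> xs = i}) \<ge> 1 / N"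
  proof -
    have "(\<Sum>k\<in>{1..N}. P k {xs. arg_min_list \<pi> xs = i}) \<ge> (\<Sum>k\<in>{1}. P k {xs. arg_min_list \<pi> xs = i})"
      by (rule sum_mono2) (use N1 Pnn in auto)
    then show ?thesis using sub[of 1] f1 by simp
  qed
  show part1: "pmf (stoch_tournament N \<pi>) i \<ge> 1 / (real N)^2"
  proof -
    have "(1 / N) / N \<le> (\<Sum>k\<in>{1..N}. P k {xs. arg_min_list \<pi> xs = i}) / N"
      using sum1 Npos by (intro divide_right_mono) simp_all
    then show ?thesis unfolding pm by (simp add: power2_eq_square)
  qed
  show "pmf (stoch_tournament N \<pi>) i \<ge> 1 / (32 * (real (\<pi> i))^2)"
  proof -
    define K where "K = N div (2 * \<pi> i)"
    have pipos: "0 < \<pi> i" using piN by auto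
    have KN: "2 * \<pi> i * K \<le> N" unfolding K_def by (metis mult.commute times_div_less_eq_dividend)
    have NK: "N < 2 * \<pi> i * (K + 1)" unfolding K_def using pipos
      using dividend_less_times_div[of "2 * \<pi> i" N] by (simp add: algebra_simps)
    have qpos: "0 < q" using q1 by simp
    show ?thesis
    proof (cases "K = 0")
      case True
      then have "N < 2 * \<pi> i" using NK by simp
      then have "real N < 2 * q" unfolding q_def by linarith
      then have "(real N)^2 \<le> (2*q)^2" using Npos by (intro power_mono) auto
      moreover have "(2*q)^2 = 4 * q^2" by (simp add: power_mult_distrib)
      moreover have "0 \<le> q^2" by simp
      ultimately have "(real N)^2 \<le> 32 * q^2" by linarith
      then have "1 / (32 * q^2) \<le> 1 / (real N)^2" using Npos qpos by (intro divide_left_mono) auto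
      then show ?thesis using part1 q_def by simp
    next
      case False
      have KleN: "K \<le> N" unfolding K_def by (rule div_le_dividend)
      have hk: "f k \<ge> k / (2 * N)" if "k \<in> {1..K}" for k
      proof -
        have "2 * \<pi> i * k \<le> N" using KN that by (meson atLeastAtMost_iff le_trans mult_le_mono2)
        then have "real (2 * \<pi> i * k) \<le> real N" by (simp only: of_nat_le_iff)
        then have kq: "2 * (k * q) \<le> N" unfolding q_def by (simp add: algebra_simps)
        have "(real k)^2 * q / (real N)^2 = (k / N) * (k * q / N)" by (simp add: power2_eq_square)
        moreover have "k * q / N \<le> 1/2" using kq Npos by (simp add: divide_simps)
        moreover have "0 \<le> k / N" by simp
        ultimately have "(real k)^2 * q / (real N)^2 \<le> (k / N) * (1/2)" by (metis mult_left_mono)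
        then show ?thesis using fbound[of k] by simp
      qed
      have gauss: "(\<Sum>k\<in>{1..n}. real k) = real n * (real n + 1) / 2" for n
        by (induction n) (auto simp: field_simps)
      have "(\<Sum>k\<in>{1..N}. P k {xs. arg_min_list \<pi> xs = i}) \<ge> (\<Sum>k\<in>{1..K}. P k {xs. arg_min_list \<pi> xs = i})"
        by (rule sum_mono2) (use KleN Pnn in auto)
      also have "(\<Sum>k\<in>{1..K}. P k {xs. arg_min_list \<pi> xs = i}) \<ge> (\<Sum>k\<in>{1..K}. real k / (2 * N))"
      proof (rule sum_mono)
        fix k assume "k \<in> {1..K}"
        then show "real k / (2 * N) \<le> P k {xs. arg_min_list \<pi> xs = i}" using hk[of k] sub[of k] by linarith
      qed
      also have "(\<Sum>k\<in>{1..K}. real k / (2 * N)) = real K * (real K + 1) / (4 * N)"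
      proof -
        have "(\<Sum>k\<in>{1..K}. real k / (2 * N)) = (\<Sum>k\<in>{1..K}. real k) / (2 * N)" by (simp add: sum_divide_distrib)
        also have "\<dots> = (real K * (real K + 1) / 2) / (2 * N)" by (simp only: gauss)
        finally show ?thesis by simp
      qed
      finally have S: "real K * (real K + 1) / (4 * N) \<le> (\<Sum>k\<in>{1..N}. P k {xs. arg_min_list \<pi> xs = i})" .
      have K1: "1 \<le> real K" using False by simp
      have "real N < 2 * q * (real K + 1)"
      proof -
        have "real N < real (2 * \<pi> i * (K + 1))" using NK by (simp only: of_nat_less_iff)
        then show ?thesis unfolding q_def by (simp add: algebra_simps)
      qed
      moreover have "2 * q * (real K + 1) \<le> 4 * q * real K"
      proof -
        have "2 * q * (real K + 1) \<le> 2 * q * (2 * real K)" using K1 qpos by (intro mult_left_mono) auto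
        then show ?thesis by simp
      qed
      ultimately have "real N < 4 * q * real K" by linarith
      have N2: "(real N)^2 \<le> 8 * q^2 * (real K * (real K + 1))"
      proof -
        have "(real N)^2 = real N * real N" by (simp add: power2_eq_square)
        also have "\<dots> \<le> (2 * q * (real K + 1)) * (4 * q * real K)"
          using \<open>real N < 2 * q * (real K + 1)\<close> \<open>real N < 4 * q * real K\<close> Npos
          by (intro mult_mono) auto
        also have "\<dots> = 8 * q^2 * (real K * (real K + 1))" by (simp add: power2_eq_square algebra_simps)
        finally show ?thesis .
      qed
      have "1 / (32 * q^2) \<le> (real K * (real K + 1) / (4 * N)) / N"
      proof -
        have X: "(real N)^2 / (8 * q^2) \<le> real K * (real K + 1)"
          using N2 qpos by (simp add: pos_divide_le_eq mult.commute)
        have "1 / (32 * q^2) = ((real N)^2 / (8 * q^2)) / (4 * (real N)^2)"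
          using Npos qpos by (simp add: field_simps power2_eq_square)
        also have "\<dots> \<le> (real K * (real K + 1)) / (4 * (real N)^2)"
          using X by (intro divide_right_mono) auto
        also have "\<dots> = (real K * (real K + 1) / (4 * N)) / N"
          by (simp add: power2_eq_square)
        finally show ?thesis .
      qed
      also have "\<dots> \<le> (\<Sum>k\<in>{1..N}. P k {xs. arg_min_list \<pi> xs = i}) / N"
        using S Npos by (intro divide_right_mono) auto
      finally show ?thesis unfolding pm q_def .
    qed
  qed
qed

theorem lemma1:
  shows "(\<forall>(N::nat) (rk::nat \<Rightarrow> nat) (cdist::nat \<Rightarrow> real) (\<pi>::nat \<Rightarrow> nat).
            N \<ge> 1 \<longrightarrow> bij_betw \<pi> {1..N} {1..N} \<longrightarrow>
            (\<forall>i\<in>{1..N}. \<forall>j\<in>{1..N}. i \<noteq> j \<longrightarrow> crowded_better rk cdist i j \<longrightarrow> \<pi> i < \<pi> j) \<longrightarrow>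
            (\<forall>i\<in>{1..N}. pmf (stoch_tournament N \<pi>) i \<ge> 1 / (real N)^2))
       \<and> (\<forall>c::real. c \<ge> 1 \<longrightarrow> (\<exists>\<delta>>0.
            \<forall>(N::nat) (rk::nat \<Rightarrow> nat) (cdist::nat \<Rightarrow> real) (\<pi>::nat \<Rightarrow> nat).
            N \<ge> 1 \<longrightarrow> bij_betw \<pi> {1..N} {1..N} \<longrightarrow>
            (\<forall>i\<in>{1..N}. \<forall>j\<in>{1..N}. i \<noteq> j \<longrightarrow> crowded_better rk cdist i j \<longrightarrow> \<pi> i < \<pi> j) \<longrightarrow>
            (\<forall>i\<in>{1..N}. real (\<pi> i) \<le> c \<longrightarrow> pmf (stoch_tournament N \<pi>) i \<ge> \<delta>)))"
proof (intro conjI allI impI)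
  fix N :: nat and rk :: "nat \<Rightarrow> nat" and cdist :: "nat \<Rightarrow> real" and \<pi> :: "nat \<Rightarrow> nat"
  assume "N \<ge> 1" "bij_betw \<pi> {1..N} {1..N}"
  then show "\<forall>i\<in>{1..N}. pmf (stoch_tournament N \<pi>) i \<ge> 1 / (real N)^2"
    using main_bounds(1) by blast
next
  fix c :: real assume c: "c \<ge> 1"
  show "\<exists>\<delta>>0. \<forall>(N::nat) (rk::nat \<Rightarrow> nat) (cdist::nat \<Rightarrow> real) (\<pi>::nat \<Rightarrow> nat).
            N \<ge> 1 \<longrightarrow> bij_betw \<pi> {1..N} {1..N} \<longrightarrow>
            (\<forall>i\<in>{1..N}. \<forall>j\<in>{1..N}. i \<noteq> j \<longrightarrow> crowded_better rk cdist i j \<longrightarrow> \<pi> i < \<pi> j) \<longrightarrow>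
            (\<forall>i\<in>{1..N}. real (\<pi> i) \<le> c \<longrightarrow> pmf (stoch_tournament N \<pi>) i \<ge> \<delta>)"
  proof (intro exI[of _ "1 / (32 * c^2)"] conjI allI impI ballI)
    show "0 < 1 / (32 * c^2)" using c by simp
  next
    fix N :: nat and rk :: "nat \<Rightarrow> nat" and cdist :: "nat \<Rightarrow> real" and \<pi> :: "nat \<Rightarrow> nat" and i
    assume N1: "N \<ge> 1" and bij: "bij_betw \<pi> {1..N} {1..N}" and iN: "i \<in> {1..N}" and pc: "real (\<pi> i) \<le> c"
    have "\<pi> i \<in> {1..N}" using bij iN bij_betwE by blast
    then have p1: "1 \<le> real (\<pi> i)" by simp
    have "(real (\<pi> i))^2 \<le> c^2" using p1 pc by (intro power_mono) auto
    then have "1 / (32 * c^2) \<le> 1 / (32 * (real (\<pi> i))^2)"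
      using p1 c by (intro divide_left_mono) auto
    also have "\<dots> \<le> pmf (stoch_tournament N \<pi>) i" using main_bounds(2)[OF N1 bij iN] .
    finally show "1 / (32 * c^2) \<le> pmf (stoch_tournament N \<pi>) i" .
  qed
qed

end
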